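(* Let $\Delta\ge1$, $p\ge1$ and $\alpha$ be positive integers. There is an infinite family of graphs of maximum degree $\Delta$ and an absolute constant $C>0$ such that for every graph $G=(V,E)$ in the family and every assignment of nonempty sets $L(v)\subseteq\{1,\dots,\alpha\}$ to vertices $v\in V$ with the property that every choice of one color $\ell_v\in L(v)$ for each $v$ yields a $p$-defective $\alpha$-coloring of $G$, we have $\min_{v\in V}|L(v)|\le C\alpha p/\Delta$, i.e. the solution domain has size $O(\alpha\cdot p/\Delta)$; consequently the contingency factor $\alpha/\min_v|L(v)|$ is $\Omega(\Delta/p)$.
   Context: A map $\varphi:V\to\{1,\dots,\alpha\}$ is a $p$-defective $\alpha$-coloring of $G=(V,E)$ if every vertex $v$ has at most $p$ neighbors $u$ with $\varphi(u)=\varphi(v)$. Solution domain size $=\min_v|L(v)|$; contingency factor $=\alpha/\min_v|L(v)|$. *)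

theory Defs
  imports Complex_Main
begin

definition simple_graph :: "nat set \<Rightarrow> (nat \<Rightarrow> nat \<Rightarrow> bool) \<Rightarrow> bool" where
  "simple_graph V E \<longleftrightarrow> finite V \<and> (\<forall>u v. E u v \<longrightarrow> u \<in> V \<and> v \<in> V)
     \<and> (\<forall>u v. E u v \<longrightarrow> E v u) \<and> (\<forall>v. \<not> E v v)"

definition degree :: "nat set \<Rightarrow> (nat \<Rightarrow> nat \<Rightarrow> bool) \<Rightarrow> nat \<Rightarrow> nat" where
  "degree V E v = card {u \<in> V. E v u}"

definition max_degree :: "nat set \<Rightarrow> (nat \<Rightarrow> nat \<Rightarrow> bool) \<Rightarrow> nat" where
  "max_degree V E = Max (degree V E ` V)"

definition defective_coloring ::
  "nat set \<Rightarrow> (nat \<Rightarrow> nat \<Rightarrow> bool) \<Rightarrow> nat \<Rightarrow> nat \<Rightarrow> (nat \<Rightarrow> nat) \<Rightarrow> bool" where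
  "defective_coloring V E p \<alpha> \<phi> \<longleftrightarrow>
     (\<forall>v\<in>V. \<phi> v \<in> {1..\<alpha>}) \<and>
     (\<forall>v\<in>V. card {u \<in> V. E v u \<and> \<phi> u = \<phi> v} \<le> p)"

definition valid_domain ::
  "nat set \<Rightarrow> (nat \<Rightarrow> nat \<Rightarrow> bool) \<Rightarrow> nat \<Rightarrow> nat \<Rightarrow> (nat \<Rightarrow> nat set) \<Rightarrow> bool" where
  "valid_domain V E p \<alpha> L \<longleftrightarrow>
     (\<forall>v\<in>V. L v \<noteq> {} \<and> L v \<subseteq> {1..\<alpha>}) \<and>
     (\<forall>\<phi>. (\<forall>v\<in>V. \<phi> v \<in> L v) \<longrightarrow> defective_coloring V E p \<alpha> \<phi>)"

definition domain_size :: "nat set \<Rightarrow> (nat \<Rightarrow> nat set) \<Rightarrow> nat" where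
  "domain_size V L = Min ((\<lambda>v. card (L v)) ` V)"

end

theory Submission
  imports Defs
begin

lemma double_count:
  assumes "finite K" "\<forall>v\<in>K. L v \<subseteq> {1..(\<alpha>::nat)}"
  shows "(\<Sum>v\<in>K. card (L v)) = (\<Sum>c\<in>{1..\<alpha>}. card {v\<in>K. c \<in> L v})"
proof -
  have "(\<Sum>v\<in>K. card (L v)) = (\<Sum>v\<in>K. \<Sum>c\<in>{1..\<alpha>}. if c \<in> L v then 1 else 0)"
  proof (rule sum.cong[OF refl])
    fix v assume "v \<in> K"
    then have "L v \<subseteq> {1..\<alpha>}" using assms(2) by blast
    then have "L v = {c\<in>{1..\<alpha>}. c \<in> L v}" by blast
    then have "card (L v) = card {c\<in>{1..\<alpha>}. c \<in> L v}" by simp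
    also have "\<dots> = (\<Sum>c\<in>{c\<in>{1..\<alpha>}. c \<in> L v}. 1)" by simp
    also have "\<dots> = (\<Sum>c\<in>{1..\<alpha>}. if c \<in> L v then 1 else 0)"
      by (subst sum.inter_filter) auto
    finally show "card (L v) = (\<Sum>c\<in>{1..\<alpha>}. if c \<in> L v then 1 else 0)" .
  qed
  also have "\<dots> = (\<Sum>c\<in>{1..\<alpha>}. \<Sum>v\<in>K. if c \<in> L v then 1 else 0)"
    by (rule sum.swap)
  also have "\<dots> = (\<Sum>c\<in>{1..\<alpha>}. card {v\<in>K. c \<in> L v})"
  proof (rule sum.cong[OF refl])
    fix c
    have "(\<Sum>v\<in>K. if c \<in> L v then 1 else (0::nat)) = (\<Sum>v\<in>{v\<in>K. c \<in> L v}. 1)"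
      using assms(1) by (subst sum.inter_filter) auto
    then show "(\<Sum>v\<in>K. if c \<in> L v then 1 else 0) = card {v\<in>K. c \<in> L v}" by simp
  qed
  finally show ?thesis .
qed

lemma pigeon:
  fixes f :: "nat \<Rightarrow> nat"
  assumes "finite A" "A \<noteq> {}" "M \<le> sum f A"
  shows "\<exists>c\<in>A. M \<le> card A * f c"
proof (rule ccontr)
  assume "\<not> ?thesis"
  then have "\<forall>c\<in>A. card A * f c < M" by auto
  then have "(\<Sum>c\<in>A. card A * f c) < (\<Sum>c\<in>A. M)"
    using assms by (intro sum_strict_mono) auto
  then have "card A * sum f A < card A * M" by (simp add: sum_distrib_left)
  then have "sum f A < M" by simp
  with assms show False by simp
qed

lemma key:
  assumes vd: "valid_domain V E p \<alpha> L" and fin: "finite V" and KV: "K \<subseteq> V"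
    and cl: "\<forall>u\<in>K. \<forall>v\<in>K. u \<noteq> v \<longrightarrow> E u v" and p1: "p \<ge> 1" and a1: "\<alpha> \<ge> 1"
  shows "card K * domain_size V L \<le> 2 * p * \<alpha>"
proof -
  define m where "m = domain_size V L"
  have Lne: "\<forall>v\<in>V. L v \<noteq> {} \<and> L v \<subseteq> {1..\<alpha>}" using vd unfolding valid_domain_def by blast
  have all: "\<And>\<phi>. (\<forall>v\<in>V. \<phi> v \<in> L v) \<Longrightarrow> defective_coloring V E p \<alpha> \<phi>"
    using vd unfolding valid_domain_def by blast
  have finK: "finite K" using fin KV finite_subset by blast
  have mle: "\<And>v. v \<in> V \<Longrightarrow> m \<le> card (L v)"
    unfolding m_def domain_size_def using fin by (intro Min_le) auto
  have "card K * m = (\<Sum>v\<in>K. m)" by simp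
  also have "\<dots> \<le> (\<Sum>v\<in>K. card (L v))" using KV mle by (intro sum_mono) auto
  also have "\<dots> = (\<Sum>c\<in>{1..\<alpha>}. card {v\<in>K. c \<in> L v})"
    using finK Lne KV by (intro double_count) auto
  finally have s: "card K * m \<le> (\<Sum>c\<in>{1..\<alpha>}. card {v\<in>K. c \<in> L v})" .
  obtain c where c: "c \<in> {1..\<alpha>}" and cm: "card K * m \<le> \<alpha> * card {v\<in>K. c \<in> L v}"
    using pigeon[OF _ _ s] a1 by auto
  show ?thesis
  proof (cases "card K * m = 0")
    case True then show ?thesis unfolding m_def by auto
  next
    case False
    define S where "S = {v\<in>K. c \<in> L v}"
    have "S \<noteq> {}" using False cm S_def by (metis card.empty mult_0_right le_0_eq)
    then obtain v0 where v0: "v0 \<in> S" by blast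
    define \<phi> where "\<phi> = (\<lambda>v. if c \<in> L v then c else (SOME x. x \<in> L v))"
    have "\<forall>v\<in>V. \<phi> v \<in> L v" unfolding \<phi>_def using Lne by (auto intro: some_in_eq[THEN iffD2])
    then have dc: "defective_coloring V E p \<alpha> \<phi>" by (rule all)
    have v0V: "v0 \<in> V" using v0 KV S_def by auto
    have "card {u \<in> V. E v0 u \<and> \<phi> u = \<phi> v0} \<le> p"
      using dc v0V unfolding defective_coloring_def by blast
    moreover have "S - {v0} \<subseteq> {u \<in> V. E v0 u \<and> \<phi> u = \<phi> v0}"
      using v0 cl KV unfolding S_def \<phi>_def by auto
    moreover have "finite {u \<in> V. E v0 u \<and> \<phi> u = \<phi> v0}" using fin by auto
    ultimately have "card (S - {v0}) \<le> p" by (meson card_mono le_trans)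
    moreover have "finite S" using finK S_def by auto
    ultimately have "card S \<le> p + 1" using v0 by (simp add: card_Diff_singleton)
    then have "card S \<le> 2 * p" using p1 by simp
    then have "\<alpha> * card S \<le> 2 * p * \<alpha>" by (simp add: mult.commute)
    with cm S_def have "card K * m \<le> 2 * p * \<alpha>" by (metis le_trans)
    then show ?thesis by (simp add: m_def)
  qed
qed

definition VV :: "nat \<Rightarrow> nat \<Rightarrow> nat set" where "VV n k = {0..<k*n}"
definition EE :: "nat \<Rightarrow> nat \<Rightarrow> nat \<Rightarrow> nat \<Rightarrow> bool" where
  "EE n k u v \<longleftrightarrow> u \<in> VV n k \<and> v \<in> VV n k \<and> u \<noteq> v \<and> u div n = v div n"

lemma div_iff:
  assumes "(n::nat) > 0"
  shows "(u div n = q) = (q * n \<le> u \<and> u < q * n + n)"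
proof -
  have a: "(q \<le> u div n) = (q * n \<le> u)" using assms by (simp add: less_eq_div_iff_mult_less_eq)
  have b: "(u div n < Suc q) = (u < Suc q * n)" using assms by (simp add: div_less_iff_less_mult)
  show ?thesis using a b by auto
qed

lemma block:
  assumes "n > 0" "v < k * n"
  shows "{u \<in> VV n k. EE n k v u} = {v div n * n..<v div n * n + n} - {v}"
proof -
  have q: "v div n < k" using assms by (simp add: div_less_iff_less_mult)
  have "Suc (v div n) * n \<le> k * n" using q by (intro mult_le_mono1) simp
  then have kk: "v div n * n + n \<le> k * n" by simp
  show ?thesis
  proof (intro set_eqI iffI)
    fix u assume "u \<in> {u \<in> VV n k. EE n k v u}"
    then have "u div n = v div n" "u \<noteq> v" unfolding EE_def by auto
    then show "u \<in> {v div n * n..<v div n * n + n} - {v}" using div_iff[OF assms(1), of u "v div n"] by auto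
  next
    fix u assume u: "u \<in> {v div n * n..<v div n * n + n} - {v}"
    then have "u div n = v div n" using div_iff[OF assms(1), of u "v div n"] by auto
    moreover have "u < k * n" using u kk by auto
    ultimately show "u \<in> {u \<in> VV n k. EE n k v u}" using u assms unfolding EE_def VV_def by auto
  qed
qed

theorem theorem4:
  "\<exists>C::real. C > 0 \<and>
    (\<forall>\<Delta> p \<alpha> :: nat. \<Delta> \<ge> 1 \<longrightarrow> p \<ge> 1 \<longrightarrow> \<alpha> \<ge> 1 \<longrightarrow>
      (\<exists>\<F> :: (nat set \<times> (nat \<Rightarrow> nat \<Rightarrow> bool)) set.
         (\<forall>N. \<exists>(V, E) \<in> \<F>. card V \<ge> N) \<and>
         (\<forall>(V, E) \<in> \<F>. simple_graph V E \<and> V \<noteq> {} \<and> max_degree V E = \<Delta> \<and>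
            (\<forall>L. valid_domain V E p \<alpha> L \<longrightarrow>
               real (domain_size V L) \<le> C * real \<alpha> * real p / real \<Delta>))))"
proof (rule exI[of _ 2], intro conjI allI impI)
  fix \<Delta> p \<alpha> :: nat
  assume d1: "\<Delta> \<ge> 1" and p1: "p \<ge> 1" and a1: "\<alpha> \<ge> 1"
  define n where "n = \<Delta> + 1"
  have n0: "n > 0" using n_def by simp
  define F where "F = {(VV n k, EE n k) | k. k \<ge> 1}"
  show "\<exists>\<F> :: (nat set \<times> (nat \<Rightarrow> nat \<Rightarrow> bool)) set.
         (\<forall>N. \<exists>(V, E) \<in> \<F>. card V \<ge> N) \<and>
         (\<forall>(V, E) \<in> \<F>. simple_graph V E \<and> V \<noteq> {} \<and> max_degree V E = \<Delta> \<and>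
            (\<forall>L. valid_domain V E p \<alpha> L \<longrightarrow>
               real (domain_size V L) \<le> 2 * real \<alpha> * real p / real \<Delta>))"
  proof (rule exI[of _ F], intro conjI allI ballI)
    fix N
    have "N \<le> N * n" using n0 by simp
    moreover have "card (VV n (N+1)) = n + N * n" by (simp add: VV_def)
    ultimately have "N + 1 \<le> card (VV n (N+1))" using n0 by linarith
    then show "\<exists>(V, E) \<in> F. card V \<ge> N" unfolding F_def
      by (intro bexI[of _ "(VV n (N+1), EE n (N+1))"]) auto
  next
    fix x assume "x \<in> F"
    then obtain k where k: "k \<ge> 1" and x: "x = (VV n k, EE n k)" unfolding F_def by auto
    have sg: "simple_graph (VV n k) (EE n k)"
      unfolding simple_graph_def by (auto simp: VV_def EE_def)
    have ne: "VV n k \<noteq> {}" using k n0 by (auto simp: VV_def)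
    have deg: "\<And>v. v \<in> VV n k \<Longrightarrow> degree (VV n k) (EE n k) v = \<Delta>"
    proof -
      fix v assume "v \<in> VV n k"
      then have "v < k * n" by (simp add: VV_def)
      then have "{u \<in> VV n k. EE n k v u} = {v div n * n..<v div n * n + n} - {v}"
        using block n0 by blast
      moreover have "v \<in> {v div n * n..<v div n * n + n}"
        using div_iff[OF n0, of v "v div n"] by auto
      ultimately show "degree (VV n k) (EE n k) v = \<Delta>"
        unfolding degree_def by (simp add: n_def)
    qed
    have md: "max_degree (VV n k) (EE n k) = \<Delta>"
    proof -
      have "degree (VV n k) (EE n k) ` VV n k = {\<Delta>}" using deg ne by auto
      then show ?thesis unfolding max_degree_def by simp
    qed
    have dom: "\<forall>L. valid_domain (VV n k) (EE n k) p \<alpha> L \<longrightarrow>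
               real (domain_size (VV n k) L) \<le> 2 * real \<alpha> * real p / real \<Delta>"
    proof (intro allI impI)
      fix L assume vd: "valid_domain (VV n k) (EE n k) p \<alpha> L"
      have KV: "{0..<n} \<subseteq> VV n k" using k by (auto simp: VV_def intro: order_less_le_trans)
      have cl: "\<forall>u\<in>{0..<n}. \<forall>v\<in>{0..<n}. u \<noteq> v \<longrightarrow> EE n k u v"
        using KV by (auto simp: EE_def)
      have "card {0..<n} * domain_size (VV n k) L \<le> 2 * p * \<alpha>"
        by (rule key[OF vd _ KV cl p1 a1]) (simp add: VV_def)
      then have "n * domain_size (VV n k) L \<le> 2 * p * \<alpha>" by simp
      then have "\<Delta> * domain_size (VV n k) L \<le> 2 * p * \<alpha>"
        by (metis n_def le_add1 mult_le_mono1 le_trans)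
      then have "real \<Delta> * real (domain_size (VV n k) L) \<le> 2 * real \<alpha> * real p"
        by (metis (mono_tags, lifting) of_nat_le_iff of_nat_mult of_nat_numeral mult.commute mult.assoc)
      then show "real (domain_size (VV n k) L) \<le> 2 * real \<alpha> * real p / real \<Delta>"
        using d1 by (simp add: pos_le_divide_eq mult.commute)
    qed
    show "case x of (V, E) \<Rightarrow> simple_graph V E \<and> V \<noteq> {} \<and> max_degree V E = \<Delta> \<and>
            (\<forall>L. valid_domain V E p \<alpha> L \<longrightarrow>
               real (domain_size V L) \<le> 2 * real \<alpha> * real p / real \<Delta>)"
      using sg ne md dom x by simp
  qed
qed simp

end
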